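(* For every set of centers $c^1,\dots,c^k\in\mathbb{R}^d$ and every $\delta\in(0,1)$, the threshold tree $\mathcal{T}$ output by the Threshold Tree Construction algorithm described in the context satisfies $\mathbf{E}[N(\mathcal{T})]\le(1+\delta)k$, where $N(\mathcal{T})$ is the number of leaves of $\mathcal{T}$.
   Context: Threshold tree: rooted binary tree of cells of $\mathbb{R}^d$, root $=\mathbb{R}^d$; an internal node $u$ split by cut $(i,\xi)$ has children $u_{left}=\{y\in u:y_i\le\xi\}$, $u_{right}=\{y\in u: y_i>\xi\}$. A median of a finite nonempty set $S\subset\mathbb{R}^d$ is a point $m$ such that for every coordinate $i$ each of $\{c\in S:c_i<m_i\}$ and $\{c\in S: c_i>m_i\}$ has at most $|S|/2$ elements. Algorithm (input $C=\{c^1,\dots,c^k\}$, $\delta$): set $\varepsilon=\min\{\delta/(15\ln k),1/320\}$. Start with $\mathcal{T}_1$ consisting of a root $r$ with assigned center set $C_r=C$. For $t=1,2,\dots$, while some leaf of $\mathcal{T}_t$ has at least two centers assigned: sample independently $i_t$ uniform in $\{1,\dots,d\}$, $\theta_t$ uniform in $(0,1)$, $\sigma_t$ uniform in $\{\pm1\}$; for every leaf $u$ of $\mathcal{T}_t$ with $|C_u|\ge2$ apply Divide-and-Share with $(i,\theta,\sigma)=(i_t,\theta_t,\sigma_t)$; the resulting tree is $\mathcal{T}_{t+1}$. Divide-and-Share on $u$: let $m^u$ be a median of $C_u$, $R_u=\max_{c\in C_u}\|c-m^u\|_2$, $Left=\{c\in C_u: c_i\le m^u_i+(\sigma+\varepsilon)\sqrt{\theta}R_u\}$,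 $Right=\{c\in C_u: c_i\ge m^u_i+(\sigma-\varepsilon)\sqrt\theta R_u\}$. If both are nonempty, split $u$ by the cut $(i,\,m^u_i+\sigma\sqrt\theta R_u)$ and assign $Left$ to $u_{left}$ and $Right$ to $u_{right}$; otherwise leave $u$ unchanged. The output $\mathcal{T}$ is the final tree. *)

theory Defs
  imports "HOL-Probability.Probability"
begin

text \<open>A leaf carries the set of centers assigned to it;
  an internal node carries its cut (i, xi): the left child is the part of
  the cell with y_i <= xi, the right child the part with y_i > xi.
  The root cell is the whole space.\<close>
datatype ('i, 'p) ttree =
    Leaf "'p set"
  | Node 'i real "('i, 'p) ttree" "('i, 'p) ttree"

fun num_leaves :: "('i, 'p) ttree \<Rightarrow> nat" where
  "num_leaves (Leaf _) = 1"
| "num_leaves (Node _ _ l r) = num_leaves l + num_leaves r"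

definition is_median :: "(real^'d) set \<Rightarrow> real^'d \<Rightarrow> bool" where
  "is_median S m \<longleftrightarrow>
     (\<forall>i. real (card {c\<in>S. c$i < m$i}) \<le> real (card S) / 2 \<and>
          real (card {c\<in>S. c$i > m$i}) \<le> real (card S) / 2)"

definition alg_eps :: "real \<Rightarrow> nat \<Rightarrow> real" where
  "alg_eps \<delta> k = min (\<delta> / (15 * ln (real k))) (1/320)"

definition divide_share ::
  "((real^'d) set \<Rightarrow> real^'d) \<Rightarrow> real \<Rightarrow> 'd \<Rightarrow> real \<Rightarrow> real \<Rightarrow> (real^'d) set
     \<Rightarrow> ('d, real^'d) ttree" where
  "divide_share med eps i \<theta> \<sigma> Cu =
     (let m = med Cu;
          R = Max ((\<lambda>c. norm (c - m)) ` Cu);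
          L = {c\<in>Cu. c$i \<le> m$i + (\<sigma> + eps) * sqrt \<theta> * R};
          Rt = {c\<in>Cu. c$i \<ge> m$i + (\<sigma> - eps) * sqrt \<theta> * R}
      in if L \<noteq> {} \<and> Rt \<noteq> {}
         then Node i (m$i + \<sigma> * sqrt \<theta> * R) (Leaf L) (Leaf Rt)
         else Leaf Cu)"

fun alg_round ::
  "((real^'d) set \<Rightarrow> real^'d) \<Rightarrow> real \<Rightarrow> 'd \<times> real \<times> real
     \<Rightarrow> ('d, real^'d) ttree \<Rightarrow> ('d, real^'d) ttree" where
  "alg_round med eps (i, \<theta>, \<sigma>) (Leaf Cu) =
     (if card Cu \<ge> 2 then divide_share med eps i \<theta> \<sigma> Cu else Leaf Cu)"
| "alg_round med eps x (Node j \<xi> l r) =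
     Node j \<xi> (alg_round med eps x l) (alg_round med eps x r)"

text \<open>The tree T_{t+1} after t rounds, driven by the random sequence omega
  (omega t is the triple (i_t, theta_t, sigma_t) of round t+1).
  Once no leaf has two centers, rounds leave the tree unchanged, so
  running forever models the while-loop.\<close>
fun alg_tree ::
  "((real^'d) set \<Rightarrow> real^'d) \<Rightarrow> real \<Rightarrow> (real^'d) set
     \<Rightarrow> (nat \<Rightarrow> 'd \<times> real \<times> real) \<Rightarrow> nat \<Rightarrow> ('d, real^'d) ttree" where
  "alg_tree med eps C \<omega> 0 = Leaf C"
| "alg_tree med eps C \<omega> (Suc t) = alg_round med eps (\<omega> t) (alg_tree med eps C \<omega> t)"

text \<open>Number of leaves of the output tree: the leaf count is nondecreasing in t
  and stabilises once the algorithm stops, so it is the supremum over t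
  (infinite if the algorithm does not terminate).\<close>
definition output_leaves ::
  "((real^'d) set \<Rightarrow> real^'d) \<Rightarrow> real \<Rightarrow> (real^'d) set
     \<Rightarrow> (nat \<Rightarrow> 'd \<times> real \<times> real) \<Rightarrow> ennreal" where
  "output_leaves med eps C \<omega> = (SUP t. ennreal (real (num_leaves (alg_tree med eps C \<omega> t))))"

definition step_measure :: "('d::finite \<times> real \<times> real) measure" where
  "step_measure = uniform_count_measure (UNIV :: 'd set)
      \<Otimes>\<^sub>M (uniform_measure lborel {0<..<1} \<Otimes>\<^sub>M uniform_count_measure {-1, 1})"

definition rounds_measure :: "(nat \<Rightarrow> 'd::finite \<times> real \<times> real) measure" where
  "rounds_measure = (\<Pi>\<^sub>M t\<in>(UNIV :: nat set). step_measure)"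

end

theory Submission
  imports Defs
begin
definition chld :: "((real^'d) set \<Rightarrow> real^'d) \<Rightarrow> real \<Rightarrow> 'd \<times> real \<times> real \<Rightarrow> (real^'d) set \<Rightarrow> (real^'d) set list" where
"chld med eps x S = (case x of (i,\<theta>,\<sigma>) \<Rightarrow> (if card S \<ge> 2 then (let m = med S; R = Max ((\<lambda>c. norm (c - m)) ` S);
   L = {c\<in>S. c$i \<le> m$i + (\<sigma> + eps) * sqrt \<theta> * R}; Rt = {c\<in>S. c$i \<ge> m$i + (\<sigma> - eps) * sqrt \<theta> * R}
  in if L \<noteq> {} \<and> Rt \<noteq> {} then [L, Rt] else [S]) else [S]))"

fun lvs :: "('i, 'p) ttree \<Rightarrow> 'p set list" where
  "lvs (Leaf S) = [S]" | "lvs (Node _ _ l r) = lvs l @ lvs r"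

definition stp where "stp med eps x Ls = concat (map (chld med eps x) Ls)"

primrec LLg where
  "LLg med eps Ls \<omega> 0 = Ls"
| "LLg med eps Ls \<omega> (Suc t) = stp med eps (\<omega> t) (LLg med eps Ls \<omega> t)"

lemma lvs_round: "lvs (alg_round med eps x T) = stp med eps x (lvs T)"
proof -
  obtain i \<theta> \<sigma> where x: "x = (i,\<theta>,\<sigma>)" by (cases x) auto
  show ?thesis unfolding x
    by (induction T) (auto simp: stp_def chld_def divide_share_def Let_def)
qed

lemma LLg_shift: "LLg med eps Ls \<omega> (Suc t) = LLg med eps (stp med eps (\<omega> 0) Ls) (\<lambda>n. \<omega> (Suc n)) t"
  by (induction t) auto

lemma lvs_alg_tree: "lvs (alg_tree med eps C \<omega> t) = LLg med eps [C] \<omega> t"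
  by (induction t) (auto simp: lvs_round)

lemma num_leaves_lvs: "num_leaves T = length (lvs T)"
  by (induction T) auto

definition psi :: "real \<Rightarrow> 'a set list \<Rightarrow> real" where
  "psi \<alpha> Ls = sum_list (map (\<lambda>S. real (card S) * real (card S) powr \<alpha>) Ls)"

lemma psi_append: "psi \<alpha> (a @ b) = psi \<alpha> a + psi \<alpha> b"
  by (simp add: psi_def)

lemma psi_nonneg: "psi \<alpha> Ls \<ge> 0"
  unfolding psi_def by (induction Ls) auto

lemma length_le_psi: "\<alpha> \<ge> 0 \<Longrightarrow> Ls \<in> lists {S. finite S \<and> S \<noteq> {}} \<Longrightarrow> real (length Ls) \<le> psi \<alpha> Ls"
proof (induction Ls)
  case (Cons S Ls)
  have "card S \<ge> 1" using Cons.prems by (auto simp: Suc_le_eq card_gt_0_iff)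
  then have "1 \<le> real (card S) powr \<alpha>" using Cons.prems by (auto intro: ge_one_powr_ge_zero)
  then have "1 \<le> real (card S) * real (card S) powr \<alpha>" using \<open>card S \<ge> 1\<close>
    using mult_mono[of 1 "real (card S)" 1 "real (card S) powr \<alpha>"] by simp
  then show ?case using Cons by (auto simp: psi_def)
qed (simp add: psi_def)

type_synonym 'd stepT = "'d \<times> real \<times> real"

lemma sets_step: "sets (step_measure :: ('d::finite \<times> real \<times> real) measure) = sets (count_space UNIV \<Otimes>\<^sub>M (borel \<Otimes>\<^sub>M count_space {-1,1}))"
  unfolding step_measure_def
  by (intro sets_pair_measure_cong) (auto simp: sets_uniform_count_measure)

lemma meas_step: "(f \<in> measurable (step_measure :: ('d::finite \<times> real \<times> real) measure) N) = (f \<in> measurable (count_space UNIV \<Otimes>\<^sub>M (borel \<Otimes>\<^sub>M count_space {-1,1})) N)"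
  by (subst measurable_cong_sets[OF sets_step refl]) (rule refl)

lemma meas_sections:
  fixes f :: "'d::finite \<times> real \<times> real \<Rightarrow> 'b"
  assumes "\<And>i \<sigma>. (\<lambda>\<theta>. f (i,\<theta>,\<sigma>)) \<in> measurable borel N"
  shows "f \<in> measurable step_measure N"
proof -
  let ?I = "(UNIV :: 'd set) \<times> {-1::real,1}"
  have g: "(\<lambda>x::'d \<times> real \<times> real. (fst x, snd (snd x))) \<in> measurable step_measure (count_space ?I)"
  proof -
    have "(\<lambda>x::'d \<times> real \<times> real. (fst x, snd (snd x))) \<in> measurable (count_space UNIV \<Otimes>\<^sub>M (borel \<Otimes>\<^sub>M count_space {-1,1})) (count_space UNIV \<Otimes>\<^sub>M count_space {-1,1})"
      by (intro measurable_Pair measurable_compose[OF measurable_snd measurable_snd] measurable_fst)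
    moreover have "count_space (UNIV::'d set) \<Otimes>\<^sub>M count_space {-1::real,1} = count_space ?I"
      by (rule pair_measure_countable) auto
    ultimately show ?thesis unfolding meas_step by simp
  qed
  have F: "(\<lambda>x::'d \<times> real \<times> real. f (fst a, fst (snd x), snd a)) \<in> measurable step_measure N" for a
  proof -
    have "(\<lambda>x::'d \<times> real \<times> real. fst (snd x)) \<in> measurable (count_space UNIV \<Otimes>\<^sub>M (borel \<Otimes>\<^sub>M count_space {-1,1})) borel"
      by (intro measurable_compose[OF measurable_snd measurable_fst])
    then have "(\<lambda>x::'d \<times> real \<times> real. fst (snd x)) \<in> measurable step_measure borel" unfolding meas_step .
    from measurable_compose[OF this assms[of "fst a" "snd a"]] show ?thesis by simp
  qed
  have "(\<lambda>x. (\<lambda>a x. f (fst a, fst (snd x), snd a)) (fst x, snd (snd x)) x) \<in> measurable step_measure N"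
    by (rule measurable_compose_countable'[OF F g]) auto
  then show ?thesis by simp
qed

lemma set_meas:
  assumes "finite S" "\<And>c. c \<in> S \<Longrightarrow> Measurable.pred M (P c)"
  shows "(\<lambda>x. {c\<in>S. P c x}) \<in> measurable M (count_space (Pow S))"
proof (subst measurable_count_space_eq2)
  show "finite (Pow S)" using assms by simp
  show "(\<lambda>x. {c \<in> S. P c x}) \<in> space M \<rightarrow> Pow S \<and>
    (\<forall>a\<in>Pow S. (\<lambda>x. {c \<in> S. P c x}) -` {a} \<inter> space M \<in> sets M)"
  proof safe
    fix a assume a: "a \<subseteq> S"
    have eq: "(\<lambda>x. {c \<in> S. P c x}) -` {a} \<inter> space M = {x\<in>space M. \<forall>c\<in>S. (P c x \<longleftrightarrow> c \<in> a)}"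
      using a by auto
    have "{x\<in>space M. \<forall>c\<in>S. (P c x \<longleftrightarrow> c \<in> a)} \<in> sets M"
    proof (rule sets.sets_Collect_finite_All[OF _ assms(1)])
      fix c assume "c \<in> S"
      have p: "{x\<in>space M. P c x} \<in> sets M" by (rule pred_def[THEN iffD1]) (rule assms(2)[OF \<open>c \<in> S\<close>])
      have "Measurable.pred M (\<lambda>x. P c x = (c \<in> a))"
        using p sets.sets_Collect_neg[OF p] by (cases "c \<in> a") (simp_all add: pred_def)
      then show "{x \<in> space M. P c x = (c \<in> a)} \<in> sets M" unfolding pred_def .
    qed
    then show "(\<lambda>x. {c \<in> S. P c x}) -` {a} \<inter> space M \<in> sets M"
      unfolding eq .
  qed
qed

lemma cntbl: "finite C \<Longrightarrow> countable (lists (Pow C))"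
  by (intro countable_lists countable_finite) simp

lemma meas_comb2:
  assumes A: "A \<in> measurable M (count_space TA)" and B: "B \<in> measurable M (count_space TB)"
    and "countable TA" and G: "\<And>a b. a \<in> TA \<Longrightarrow> b \<in> TB \<Longrightarrow> G a b \<in> T"
  shows "(\<lambda>x. G (A x) (B x)) \<in> measurable M (count_space T)"
proof (rule measurable_compose_countable'[OF _ A assms(3)])
  fix a assume a: "a \<in> TA"
  have "G a \<in> measurable (count_space TB) (count_space T)"
    using G[OF a] by (auto simp: measurable_count_space_eq1)
  from measurable_compose[OF B this] show "(\<lambda>x. G a (B x)) \<in> measurable M (count_space T)" .
qed

lemma chld_sec_meas:
  assumes "finite C" "S \<subseteq> C"
  shows "(\<lambda>\<theta>. chld med eps (i, \<theta>, \<sigma>) S) \<in> measurable borel (count_space (lists (Pow C)))"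
proof -
  define m where "m = med S"
  define R where "R = Max ((\<lambda>c. norm (c - m)) ` S)"
  define L where "L = (\<lambda>\<theta>. {c\<in>S. c$i \<le> m$i + (\<sigma> + eps) * sqrt \<theta> * R})"
  define Rt where "Rt = (\<lambda>\<theta>. {c\<in>S. c$i \<ge> m$i + (\<sigma> - eps) * sqrt \<theta> * R})"
  define G where "G = (\<lambda>a b. if card S \<ge> 2 then (if a \<noteq> {} \<and> b \<noteq> {} then [a, b] else [S]) else [S])"
  have fin: "finite S" using assms finite_subset by auto
  have eq: "(\<lambda>\<theta>. chld med eps (i, \<theta>, \<sigma>) S) = (\<lambda>\<theta>. G (L \<theta>) (Rt \<theta>))"
    by (auto simp: chld_def G_def L_def Rt_def m_def R_def Let_def)
  have mL: "L \<in> measurable borel (count_space (Pow S))"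
    unfolding L_def by (rule set_meas[OF fin]) measurable
  have mR: "Rt \<in> measurable borel (count_space (Pow S))"
    unfolding Rt_def by (rule set_meas[OF fin]) measurable
  show "(\<lambda>\<theta>. chld med eps (i, \<theta>, \<sigma>) S) \<in> measurable borel (count_space (lists (Pow C)))"
    unfolding eq
    by (rule meas_comb2[OF mL mR]) (use fin assms(2) in \<open>auto simp: G_def countable_finite\<close>)
qed

lemma chld_meas:
  assumes "finite C" "S \<subseteq> C"
  shows "(\<lambda>x. chld med eps x S) \<in> measurable step_measure (count_space (lists (Pow C)))"
  by (rule meas_sections) (rule chld_sec_meas[OF assms])

lemma stp_meas:
  assumes "finite C"
  shows "Ls \<in> lists (Pow C) \<Longrightarrow> (\<lambda>x. stp med eps x Ls) \<in> measurable step_measure (count_space (lists (Pow C)))"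
proof (induction Ls)
  case Nil
  then show ?case by (simp add: stp_def)
next
  case (Cons S Ls)
  have eq: "(\<lambda>x. stp med eps x (S # Ls)) = (\<lambda>x. (\<lambda>a b. a @ b) (chld med eps x S) (stp med eps x Ls))"
    by (simp add: stp_def)
  have S: "S \<subseteq> C" and L: "Ls \<in> lists (Pow C)" using Cons.prems by auto
  show ?case unfolding eq
    by (rule meas_comb2[OF chld_meas[OF assms(1) S] Cons.IH[OF L]]) (use assms(1) cntbl S L in auto)
qed

lemma LLg_meas:
  assumes "finite C" "Ls \<in> lists (Pow C)"
  shows "(\<lambda>\<omega>. LLg med eps Ls \<omega> t) \<in> measurable rounds_measure (count_space (lists (Pow C)))"
proof (induction t)
  case 0
  then show ?case using assms by simp
next
  case (Suc t)
  show ?case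
  proof (simp, rule measurable_compose_countable'[OF _ Suc.IH])
    fix a assume a: "a \<in> lists (Pow C)"
    have "(\<lambda>\<omega>. \<omega> t) \<in> measurable rounds_measure step_measure"
      unfolding rounds_measure_def by (rule measurable_component_singleton) simp
    from measurable_compose[OF this stp_meas[OF assms(1) a]]
    show "(\<lambda>\<omega>. stp med eps (\<omega> t) a) \<in> measurable rounds_measure (count_space (lists (Pow C)))" .
  qed (use assms cntbl in auto)
qed

definition Vs :: "'a set \<Rightarrow> 'a set set" where "Vs C = {S. S \<subseteq> C \<and> S \<noteq> {}}"

lemma chld_valid: "S \<in> Vs C \<Longrightarrow> chld med eps x S \<in> lists (Vs C)"
  by (cases x) (auto simp: chld_def Let_def Vs_def)

lemma stp_valid: "Ls \<in> lists (Vs C) \<Longrightarrow> stp med eps x Ls \<in> lists (Vs C)"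
  using chld_valid[of _ C med eps x] by (induction Ls) (auto simp: stp_def)

lemma LLg_valid: "Ls \<in> lists (Vs C) \<Longrightarrow> LLg med eps Ls \<omega> t \<in> lists (Vs C)"
proof (induction t)
  case (Suc t)
  then have "LLg med eps Ls \<omega> t \<in> lists (Vs C)" by simp
  then show ?case by (simp only: LLg.simps) (rule stp_valid)
qed simp

lemma Vs_Pow: "lists (Vs C) \<subseteq> lists (Pow C)"
  by (auto simp: Vs_def)

definition phi :: "real \<Rightarrow> 'a set \<Rightarrow> real" where
  "phi \<alpha> X = real (card X) * real (card X) powr \<alpha>"

lemma phi_sum: "finite S \<Longrightarrow> X \<subseteq> S \<Longrightarrow> phi \<alpha> X = (\<Sum>c\<in>S. if c \<in> X then real (card X) powr \<alpha> else 0)"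
  unfolding phi_def by (simp add: sum.If_cases Int_absorb1 Int_absorb2)

definition hc :: "real \<Rightarrow> real \<Rightarrow> real \<Rightarrow> real \<Rightarrow> real \<Rightarrow> real \<Rightarrow> real" where
  "hc \<alpha> s \<epsilon> R ac \<theta> = (if ac > 0 then
      (s/2) powr \<alpha> * indicator {0<..<ac\<^sup>2 / (R\<^sup>2 * (1+\<epsilon>)\<^sup>2)} \<theta>
    + s powr \<alpha> * indicator {ac\<^sup>2 / (R\<^sup>2 * (1+\<epsilon>)\<^sup>2)..1} \<theta>
    + (s/2) powr \<alpha> * indicator {ac\<^sup>2 / (R\<^sup>2 * (1+\<epsilon>)\<^sup>2)..ac\<^sup>2 / (R\<^sup>2 * (1-\<epsilon>)\<^sup>2)} \<theta>
   else s powr \<alpha>)"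

lemma pointwise:
  fixes S :: "'p set" and a :: "'p \<Rightarrow> real"
  assumes fin: "finite S" and s2: "card S \<ge> 2"
    and med: "2 * card {c\<in>S. a c > 0} \<le> card S"
    and R: "R > 0" and e: "0 \<le> \<epsilon>" "\<epsilon> < 1" and th: "0 < \<theta>" "\<theta> < 1" and al: "0 \<le> \<alpha>"
  defines "F \<equiv> {c\<in>S. a c \<ge> (1-\<epsilon>) * (sqrt \<theta> * R)}"
    and "N \<equiv> {c\<in>S. a c \<le> (1+\<epsilon>) * (sqrt \<theta> * R)}"
  shows "(if F \<noteq> {} \<and> N \<noteq> {} then phi \<alpha> F + phi \<alpha> N else phi \<alpha> S)
          \<le> (\<Sum>c\<in>S. hc \<alpha> (real (card S)) \<epsilon> R (a c) \<theta>)"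
proof -
  define t where "t = sqrt \<theta> * R"
  define s where "s = real (card S)"
  define p where "p = (\<lambda>c. (a c)\<^sup>2 / (R\<^sup>2 * (1+\<epsilon>)\<^sup>2))"
  define q where "q = (\<lambda>c. (a c)\<^sup>2 / (R\<^sup>2 * (1-\<epsilon>)\<^sup>2))"
  have t: "t > 0" unfolding t_def using th R by simp
  have t2: "t\<^sup>2 = \<theta> * R\<^sup>2" unfolding t_def using th by (simp add: power_mult_distrib)
  have sqp: "((1+\<epsilon>) * t)\<^sup>2 = \<theta> * (R\<^sup>2 * (1+\<epsilon>)\<^sup>2)"
    unfolding power_mult_distrib t2 by (simp add: mult_ac)
  have sqm: "((1-\<epsilon>) * t)\<^sup>2 = \<theta> * (R\<^sup>2 * (1-\<epsilon>)\<^sup>2)"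
    unfolding power_mult_distrib t2 by (simp add: mult_ac)
  have Fpos: "F \<subseteq> {c\<in>S. a c > 0}"
  proof
    fix c assume "c \<in> F"
    then have "a c \<ge> (1-\<epsilon>) * t" "c \<in> S" unfolding F_def t_def by auto
    moreover have "(1-\<epsilon>) * t > 0" using t e by simp
    ultimately show "c \<in> {c\<in>S. a c > 0}" by auto
  qed
  have cardF: "2 * card F \<le> card S"
  proof -
    have "card F \<le> card {c\<in>S. a c > 0}" by (rule card_mono) (use fin Fpos in auto)
    then show ?thesis using med by linarith
  qed
  have Nne: "N \<noteq> {}"
  proof
    assume "N = {}"
    then have "\<forall>c\<in>S. a c > (1+\<epsilon>) * t" unfolding N_def t_def by auto
    moreover have "(1+\<epsilon>) * t > 0" using t e by simp
    ultimately have "{c\<in>S. a c > 0} = S" by force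
    then show False using med s2 by simp
  qed
  have key1: "a c > (1+\<epsilon>) * t" if "a c > 0" "\<theta> < p c" for c
  proof -
    have "\<theta> * (R\<^sup>2 * (1+\<epsilon>)\<^sup>2) < (a c)\<^sup>2" using that(2) R e unfolding p_def
      by (simp add: pos_less_divide_eq)
    then have "((1+\<epsilon>) * t)\<^sup>2 < (a c)\<^sup>2" unfolding sqp .
    then show ?thesis using that(1) power_less_imp_less_base[of "(1+\<epsilon>) * t" 2 "a c"] by simp
  qed
  have key2: "p c \<le> \<theta>" if "a c > 0" "a c \<le> (1+\<epsilon>) * t" for c
  proof -
    have "(a c)\<^sup>2 \<le> ((1+\<epsilon>) * t)\<^sup>2" using that by (intro power_mono) auto
    then have "(a c)\<^sup>2 \<le> \<theta> * (R\<^sup>2 * (1+\<epsilon>)\<^sup>2)" unfolding sqp .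
    then show ?thesis unfolding p_def using R e by (simp add: pos_divide_le_eq)
  qed
  have key3: "\<theta> \<le> q c" if "a c \<ge> (1-\<epsilon>) * t" for c
  proof -
    have "((1-\<epsilon>) * t)\<^sup>2 \<le> (a c)\<^sup>2" using that t e by (intro power_mono) auto
    then have "\<theta> * (R\<^sup>2 * (1-\<epsilon>)\<^sup>2) \<le> (a c)\<^sup>2" unfolding sqm .
    then show ?thesis unfolding q_def using R e by (simp add: pos_le_divide_eq)
  qed
  have hc_eq: "hc \<alpha> s \<epsilon> R (a c) \<theta> = (if a c > 0 then
      (s/2) powr \<alpha> * indicator {0<..<p c} \<theta> + s powr \<alpha> * indicator {p c..1} \<theta>
      + (s/2) powr \<alpha> * indicator {p c..q c} \<theta> else s powr \<alpha>)" for c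
    unfolding hc_def p_def q_def ..
  have s0: "s \<ge> 2" unfolding s_def using s2 by simp
  have A12: "(s/2) powr \<alpha> \<le> s powr \<alpha>" using s0 al by (intro powr_mono2) auto
  have A1: "0 \<le> (s/2) powr \<alpha>" by simp
  have hc_ge1: "(s/2) powr \<alpha> \<le> hc \<alpha> s \<epsilon> R (a c) \<theta>" for c
    unfolding hc_eq using A12 th by (auto simp: indicator_def)
  have hc_ge2: "s powr \<alpha> \<le> hc \<alpha> s \<epsilon> R (a c) \<theta>" if "\<not> (a c > 0 \<and> \<theta> < p c)" for c
    unfolding hc_eq using that A12 th by (auto simp: indicator_def)
  have hc_ge3: "s powr \<alpha> + (s/2) powr \<alpha> \<le> hc \<alpha> s \<epsilon> R (a c) \<theta>" if "a c > 0" "p c \<le> \<theta>" "\<theta> \<le> q c" for c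
    unfolding hc_eq using that A12 th by (auto simp: indicator_def)
  show ?thesis
  proof (cases "F = {}")
    case True
    have "phi \<alpha> S = (\<Sum>c\<in>S. s powr \<alpha>)" unfolding phi_def s_def by simp
    also have "\<dots> \<le> (\<Sum>c\<in>S. hc \<alpha> s \<epsilon> R (a c) \<theta>)"
    proof (rule sum_mono)
      fix c assume c: "c \<in> S"
      have "\<not> (a c > 0 \<and> \<theta> < p c)"
      proof
        assume "a c > 0 \<and> \<theta> < p c"
        then have "a c > (1+\<epsilon>) * t" using key1 by auto
        moreover have "(1+\<epsilon>) * t \<ge> (1-\<epsilon>) * t" using t e by simp
        ultimately have "c \<in> F" using c unfolding F_def t_def by auto
        then show False using True by auto
      qed
      then show "s powr \<alpha> \<le> hc \<alpha> s \<epsilon> R (a c) \<theta>" by (rule hc_ge2)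
    qed
    finally show ?thesis using True unfolding s_def by simp
  next
    case False
    have FS: "F \<subseteq> S" and NS: "N \<subseteq> S" unfolding F_def N_def by auto
    have cF: "real (card F) powr \<alpha> \<le> (s/2) powr \<alpha>"
      using cardF al unfolding s_def by (intro powr_mono2) auto
    have cN: "real (card N) powr \<alpha> \<le> s powr \<alpha>"
      using card_mono[OF fin NS] al unfolding s_def by (intro powr_mono2) auto
    have "phi \<alpha> F + phi \<alpha> N = (\<Sum>c\<in>S. (if c \<in> F then real (card F) powr \<alpha> else 0) + (if c \<in> N then real (card N) powr \<alpha> else 0))"
      unfolding phi_sum[OF fin FS] phi_sum[OF fin NS] sum.distrib ..
    also have "\<dots> \<le> (\<Sum>c\<in>S. hc \<alpha> s \<epsilon> R (a c) \<theta>)"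
    proof (rule sum_mono)
      fix c assume c: "c \<in> S"
      show "(if c \<in> F then real (card F) powr \<alpha> else 0) + (if c \<in> N then real (card N) powr \<alpha> else 0) \<le> hc \<alpha> s \<epsilon> R (a c) \<theta>"
      proof (cases "c \<in> F")
        case cF': True
        then have pos: "a c > 0" using Fpos by auto
        show ?thesis
        proof (cases "c \<in> N")
          case True
          have "p c \<le> \<theta>" using key2[OF pos] True unfolding N_def t_def by auto
          moreover have "\<theta> \<le> q c" using key3 cF' unfolding F_def t_def by auto
          ultimately have "s powr \<alpha> + (s/2) powr \<alpha> \<le> hc \<alpha> s \<epsilon> R (a c) \<theta>" using hc_ge3[OF pos] by blast
          moreover have "(if c \<in> F then real (card F) powr \<alpha> else 0) + (if c \<in> N then real (card N) powr \<alpha> else 0)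
             = real (card F) powr \<alpha> + real (card N) powr \<alpha>" using cF' True by simp
          ultimately show ?thesis using cF cN by linarith
        next
          case False
          then show ?thesis using hc_ge1[of c] cF cF' by simp
        qed
      next
        case cnF: False
        show ?thesis
        proof (cases "c \<in> N")
          case True
          have "\<not> (a c > 0 \<and> \<theta> < p c)"
          proof
            assume "a c > 0 \<and> \<theta> < p c"
            then have "a c > (1+\<epsilon>) * t" using key1 by auto
            moreover have "(1+\<epsilon>) * t \<ge> (1-\<epsilon>) * t" using t e by simp
            ultimately have "c \<in> F" using c unfolding F_def t_def by auto
            then show False using cnF by auto
          qed
          then show ?thesis using hc_ge2[of c] cN cnF True by simp
        next
          case False
          have "0 \<le> hc \<alpha> s \<epsilon> R (a c) \<theta>" using hc_ge1[of c] A1 by linarith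
          then show ?thesis using cnF False by simp
        qed
      qed
    qed
    finally show ?thesis using False Nne unfolding s_def by simp
  qed
qed

lemma chld_bound:
  fixes S :: "(real^'d) set"
  assumes fin: "finite S" and s2: "card S \<ge> 2" and md: "is_median S (med S)"
    and sg: "\<sigma> \<in> {-1,1}" and e: "0 \<le> eps" "eps < 1" and th: "0 < \<theta>" "\<theta> < 1" and al: "0 \<le> \<alpha>"
  defines "m \<equiv> med S"
  defines "R \<equiv> Max ((\<lambda>c. norm (c - m)) ` S)"
  shows "psi \<alpha> (chld med eps (i,\<theta>,\<sigma>) S) \<le> (\<Sum>c\<in>S. hc \<alpha> (real (card S)) eps R (\<sigma> * (c$i - m$i)) \<theta>)"
    and "R > 0" and "\<And>c. c \<in> S \<Longrightarrow> \<bar>\<sigma> * (c$i - m$i)\<bar> \<le> R"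
proof -
  define a where "a = (\<lambda>c::real^'d. \<sigma> * (c$i - m$i))"
  define F where "F = {c\<in>S. a c \<ge> (1-eps) * (sqrt \<theta> * R)}"
  define N where "N = {c\<in>S. a c \<le> (1+eps) * (sqrt \<theta> * R)}"
  have Rge: "norm (c - m) \<le> R" if "c \<in> S" for c
    unfolding R_def using fin that by (intro Max_ge) auto
  show absR: "\<bar>\<sigma> * (c$i - m$i)\<bar> \<le> R" if "c \<in> S" for c
  proof -
    have "\<bar>(c - m)$i\<bar> \<le> norm (c - m)" by (rule component_le_norm_cart)
    then show ?thesis using Rge[OF that] sg by (auto simp: abs_mult)
  qed
  show Rpos: "R > 0"
  proof -
    obtain c where c: "c \<in> S" "c \<noteq> m"
    proof -
      have "\<not> S \<subseteq> {m}"
      proof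
        assume "S \<subseteq> {m}"
        then have "card S \<le> card {m}" by (intro card_mono) auto
        then show False using s2 by simp
      qed
      then show ?thesis using that by auto
    qed
    then have "norm (c - m) > 0" by simp
    then show ?thesis using Rge[OF c(1)] by linarith
  qed
  have med2: "2 * card {c\<in>S. a c > 0} \<le> card S"
  proof -
    have mi: "real (card {c\<in>S. c$i < m$i}) \<le> real (card S) / 2" "real (card {c\<in>S. c$i > m$i}) \<le> real (card S) / 2"
      using md unfolding is_median_def m_def by auto
    show ?thesis
    proof (cases "\<sigma> = 1")
      case True
      then have "{c\<in>S. a c > 0} = {c\<in>S. c$i > m$i}" unfolding a_def by auto
      then show ?thesis using mi(2) by simp
    next
      case False
      then have "\<sigma> = -1" using sg by auto
      then have "{c\<in>S. a c > 0} = {c\<in>S. c$i < m$i}" unfolding a_def by auto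
      then show ?thesis using mi(1) by simp
    qed
  qed
  have ch: "chld med eps (i,\<theta>,\<sigma>) S = (if {c\<in>S. c$i \<le> m$i + (\<sigma> + eps) * sqrt \<theta> * R} \<noteq> {} \<and> {c\<in>S. c$i \<ge> m$i + (\<sigma> - eps) * sqrt \<theta> * R} \<noteq> {}
      then [{c\<in>S. c$i \<le> m$i + (\<sigma> + eps) * sqrt \<theta> * R}, {c\<in>S. c$i \<ge> m$i + (\<sigma> - eps) * sqrt \<theta> * R}] else [S])"
    unfolding chld_def m_def R_def using s2 by (simp only: prod.case Let_def if_True)
  have eq: "psi \<alpha> (chld med eps (i,\<theta>,\<sigma>) S) = (if F \<noteq> {} \<and> N \<noteq> {} then phi \<alpha> F + phi \<alpha> N else phi \<alpha> S)"
  proof (cases "\<sigma> = 1")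
    case True
    have L: "{c\<in>S. c$i \<le> m$i + (\<sigma> + eps) * sqrt \<theta> * R} = N"
      unfolding N_def a_def True by (auto simp: algebra_simps)
    have Rt: "{c\<in>S. c$i \<ge> m$i + (\<sigma> - eps) * sqrt \<theta> * R} = F"
      unfolding F_def a_def True by (auto simp: algebra_simps)
    show ?thesis unfolding ch L Rt by (simp add: psi_def phi_def add.commute)
  next
    case False
    then have sm: "\<sigma> = -1" using sg by auto
    have L: "{c\<in>S. c$i \<le> m$i + (\<sigma> + eps) * sqrt \<theta> * R} = F"
      unfolding F_def a_def sm by (auto simp: algebra_simps)
    have Rt: "{c\<in>S. c$i \<ge> m$i + (\<sigma> - eps) * sqrt \<theta> * R} = N"
      unfolding N_def a_def sm by (auto simp: algebra_simps)
    show ?thesis unfolding ch L Rt by (simp add: psi_def phi_def)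
  qed
  show "psi \<alpha> (chld med eps (i,\<theta>,\<sigma>) S) \<le> (\<Sum>c\<in>S. hc \<alpha> (real (card S)) eps R (\<sigma> * (c$i - m$i)) \<theta>)"
    unfolding eq F_def N_def
    using pointwise[OF fin s2 med2 Rpos e th al] unfolding a_def .
qed

lemma hc_nonneg: "s \<ge> 0 \<Longrightarrow> hc \<alpha> s \<epsilon> R ac \<theta> \<ge> 0"
  unfolding hc_def by (auto simp: indicator_def)

lemma hc_int:
  assumes e: "0 \<le> \<epsilon>" "\<epsilon> < 1" and R: "R > 0" and aR: "\<bar>ac\<bar> \<le> R" and s: "s \<ge> 0"
    and al2: "2 powr \<alpha> = ((1+\<epsilon>)/(1-\<epsilon>))\<^sup>2"
  shows "(\<integral>\<^sup>+\<theta>. ennreal (hc \<alpha> s \<epsilon> R ac \<theta>) * indicator {0<..<1} \<theta> \<partial>lborel) \<le> ennreal (s powr \<alpha>)"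
proof (cases "ac > 0")
  case False
  then have hh: "hc \<alpha> s \<epsilon> R ac \<theta> = s powr \<alpha>" for \<theta> by (simp add: hc_def)
  have "(\<integral>\<^sup>+\<theta>. ennreal (hc \<alpha> s \<epsilon> R ac \<theta>) * indicator {0<..<1} \<theta> \<partial>lborel)
     = (\<integral>\<^sup>+\<theta>. ennreal (s powr \<alpha>) * indicator {0<..<1::real} \<theta> \<partial>lborel)"
    by (simp only: hh)
  also have "\<dots> = ennreal (s powr \<alpha>)" by (subst nn_integral_cmult_indicator) auto
  finally show ?thesis by simp
next
  case True
  define p where "p = ac\<^sup>2 / (R\<^sup>2 * (1+\<epsilon>)\<^sup>2)"
  define q where "q = ac\<^sup>2 / (R\<^sup>2 * (1-\<epsilon>)\<^sup>2)"
  define A1 where "A1 = (s/2) powr \<alpha>"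
  define A2 where "A2 = s powr \<alpha>"
  have p0: "0 \<le> p" unfolding p_def by simp
  have "ac\<^sup>2 \<le> R\<^sup>2" using aR True R by (intro power_mono) auto
  also have "R\<^sup>2 \<le> R\<^sup>2 * (1+\<epsilon>)\<^sup>2"
  proof -
    have "1 \<le> (1+\<epsilon>)\<^sup>2" using e by (simp add: one_le_power)
    then show ?thesis using mult_left_mono[of 1 "(1+\<epsilon>)\<^sup>2" "R\<^sup>2"] by simp
  qed
  finally have p1: "p \<le> 1" unfolding p_def using R e by (simp add: divide_le_eq)
  have qp: "q = p * ((1+\<epsilon>)/(1-\<epsilon>))\<^sup>2"
  proof -
    have ne: "(1+\<epsilon>)\<^sup>2 \<noteq> 0" "(1-\<epsilon>)\<^sup>2 \<noteq> 0" "R\<^sup>2 \<noteq> 0" using e R by auto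
    show ?thesis unfolding p_def q_def power_divide using ne by (simp add: field_simps)
  qed
  have pq: "p \<le> q"
  proof -
    have "1 \<le> (1+\<epsilon>)/(1-\<epsilon>)" using e by (simp add: field_simps)
    then have "1 \<le> ((1+\<epsilon>)/(1-\<epsilon>))\<^sup>2" by (simp add: one_le_power)
    then show ?thesis unfolding qp using p0 mult_left_mono[of 1 _ p] by simp
  qed
  have A1q: "A1 * q = A2 * p"
  proof -
    have "A1 = A2 / 2 powr \<alpha>" unfolding A1_def A2_def using s by (simp add: powr_divide)
    then show ?thesis unfolding qp al2[symmetric] by simp
  qed
  have A10: "A1 \<ge> 0" and A20: "A2 \<ge> 0" unfolding A1_def A2_def by auto
  have hc_eq: "ennreal (hc \<alpha> s \<epsilon> R ac \<theta>) = ennreal A1 * indicator {0<..<p} \<theta> + ennreal A2 * indicator {p..1} \<theta> + ennreal A1 * indicator {p..q} \<theta>" for \<theta>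
    unfolding hc_def p_def[symmetric] q_def[symmetric] A1_def[symmetric] A2_def[symmetric] using True A10 A20
    by (auto simp: indicator_def)
  have "(\<integral>\<^sup>+\<theta>. ennreal (hc \<alpha> s \<epsilon> R ac \<theta>) * indicator {0<..<1} \<theta> \<partial>lborel) \<le> (\<integral>\<^sup>+\<theta>. ennreal (hc \<alpha> s \<epsilon> R ac \<theta>) \<partial>lborel)"
    by (intro nn_integral_mono) (auto simp: indicator_def)
  also have "\<dots> = (\<integral>\<^sup>+\<theta>. ennreal A1 * indicator {0<..<p} \<theta> + ennreal A2 * indicator {p..1} \<theta> + ennreal A1 * indicator {p..q} \<theta> \<partial>lborel)"
    unfolding hc_eq ..
  also have "\<dots> = ennreal A1 * emeasure lborel {0<..<p} + ennreal A2 * emeasure lborel {p..1} + ennreal A1 * emeasure lborel {p..q}"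
    by (simp add: nn_integral_add nn_integral_cmult_indicator)
  also have "\<dots> = ennreal (A1 * p + A2 * (1 - p) + A1 * (q - p))"
    using p0 p1 pq A10 A20 by (simp add: ennreal_mult)
  also have "A1 * p + A2 * (1 - p) + A1 * (q - p) = A2"
    using A1q by (simp add: algebra_simps)
  finally show ?thesis unfolding A2_def .
qed

lemma theta_int:
  fixes S :: "(real^'d) set"
  assumes fC: "finite C" "S \<subseteq> C" "S \<noteq> {}" and md: "2 \<le> card S \<Longrightarrow> is_median S (med S)"
    and sg: "\<sigma> \<in> {-1,1}" and e: "0 \<le> eps" "eps < 1" and al: "0 \<le> \<alpha>"
    and al2: "2 powr \<alpha> = ((1+eps)/(1-eps))\<^sup>2"
  shows "(\<integral>\<^sup>+\<theta>. ennreal (psi \<alpha> (chld med eps (i,\<theta>,\<sigma>) S)) \<partial>uniform_measure lborel {0<..<1}) \<le> ennreal (psi \<alpha> [S])"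
proof -
  let ?U = "uniform_measure lborel {0<..<(1::real)}"
  have fin: "finite S" using fC finite_subset by auto
  have m1: "(\<lambda>\<theta>. chld med eps (i,\<theta>,\<sigma>) S) \<in> measurable lborel (count_space (lists (Pow C)))"
    using chld_sec_meas[OF fC(1,2), of med eps i \<sigma>] by (simp add: measurable_cong_sets[OF sets_lborel refl])
  have m2: "(\<lambda>L. ennreal (psi \<alpha> L)) \<in> measurable (count_space (lists (Pow C))) borel"
    by (simp add: measurable_count_space_eq1)
  have meas: "(\<lambda>\<theta>. ennreal (psi \<alpha> (chld med eps (i,\<theta>,\<sigma>) S))) \<in> borel_measurable lborel"
    using measurable_compose[OF m1 m2] by simp
  have U1: "emeasure ?U (space ?U) = 1"
    by (rule prob_space.emeasure_space_1, rule prob_space_uniform_measure) auto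
  show ?thesis
  proof (cases "card S \<ge> 2")
    case False
    then have "chld med eps (i,\<theta>,\<sigma>) S = [S]" for \<theta> by (simp add: chld_def)
    then show ?thesis using U1 by simp
  next
    case True
    note md' = md[OF True]
    define m where "m = med S"
    define R where "R = Max ((\<lambda>c. norm (c - m)) ` S)"
    define s where "s = real (card S)"
    define H where "H = (\<lambda>c \<theta>. hc \<alpha> s eps R (\<sigma> * (c$i - m$i)) \<theta>)"
    have Rpos: "R > 0" and aR: "\<And>c. c \<in> S \<Longrightarrow> \<bar>\<sigma> * (c$i - m$i)\<bar> \<le> R"
    proof -
      have h: "(0::real) < 1/2" "(1/2::real) < 1" by auto
      show "R > 0" using chld_bound(2)[where \<theta>="1/2" and S=S and med=med, OF fin True md' sg e h al] unfolding R_def m_def by simp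
      show "\<And>c. c \<in> S \<Longrightarrow> \<bar>\<sigma> * (c$i - m$i)\<bar> \<le> R"
        using chld_bound(3)[where \<theta>="1/2" and i=i and S=S and med=med, OF fin True md' sg e h al] unfolding R_def m_def by simp
    qed
    have pw: "psi \<alpha> (chld med eps (i,\<theta>,\<sigma>) S) \<le> (\<Sum>c\<in>S. H c \<theta>)" if "0 < \<theta>" "\<theta> < 1" for \<theta>
      using chld_bound(1)[where S=S and med=med and i=i, OF fin True md' sg e that al] unfolding H_def s_def R_def m_def by simp
    have Hn: "H c \<theta> \<ge> 0" for c \<theta> unfolding H_def s_def by (rule hc_nonneg) simp
    have Hm: "(\<lambda>\<theta>. ennreal (H c \<theta>) * indicator {0<..<1} \<theta>) \<in> borel_measurable lborel" for c
      unfolding H_def hc_def by measurable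
    have "(\<integral>\<^sup>+\<theta>. ennreal (psi \<alpha> (chld med eps (i,\<theta>,\<sigma>) S)) \<partial>?U)
        = (\<integral>\<^sup>+\<theta>. ennreal (psi \<alpha> (chld med eps (i,\<theta>,\<sigma>) S)) * indicator {0<..<1} \<theta> \<partial>lborel)"
      by (subst nn_integral_uniform_measure[OF meas]) (auto simp: divide_ennreal_def)
    also have "\<dots> \<le> (\<integral>\<^sup>+\<theta>. (\<Sum>c\<in>S. ennreal (H c \<theta>) * indicator {0<..<1} \<theta>) \<partial>lborel)"
    proof (rule nn_integral_mono)
      fix \<theta> :: real
      show "ennreal (psi \<alpha> (chld med eps (i,\<theta>,\<sigma>) S)) * indicator {0<..<1} \<theta> \<le> (\<Sum>c\<in>S. ennreal (H c \<theta>) * indicator {0<..<1} \<theta>)"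
      proof (cases "\<theta> \<in> {0<..<1}")
        case True
        then have "ennreal (psi \<alpha> (chld med eps (i,\<theta>,\<sigma>) S)) \<le> ennreal (\<Sum>c\<in>S. H c \<theta>)"
          using pw by (intro ennreal_leI) auto
        also have "\<dots> = (\<Sum>c\<in>S. ennreal (H c \<theta>))" using Hn by simp
        finally show ?thesis using True by simp
      qed simp
    qed
    also have "\<dots> = (\<Sum>c\<in>S. \<integral>\<^sup>+\<theta>. ennreal (H c \<theta>) * indicator {0<..<1} \<theta> \<partial>lborel)"
      by (rule nn_integral_sum) (rule Hm)
    also have "\<dots> \<le> (\<Sum>c\<in>S. ennreal (s powr \<alpha>))"
    proof (rule sum_mono)
      fix c assume "c \<in> S"
      show "(\<integral>\<^sup>+\<theta>. ennreal (H c \<theta>) * indicator {0<..<1} \<theta> \<partial>lborel) \<le> ennreal (s powr \<alpha>)"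
        unfolding H_def by (rule hc_int[OF e Rpos aR[OF \<open>c \<in> S\<close>] _ al2]) (simp add: s_def)
    qed
    also have "\<dots> = ennreal (psi \<alpha> [S])"
      by (simp add: psi_def s_def ennreal_mult ennreal_of_nat_eq_real_of_nat)
    finally show ?thesis .
  qed
qed

abbreviation "UC \<equiv> uniform_count_measure (UNIV :: 'd::finite set)"
abbreviation "UT \<equiv> uniform_measure lborel {0<..<(1::real)}"
abbreviation "US \<equiv> uniform_count_measure {-1::real, 1}"

lemma ps_UC: "prob_space (uniform_count_measure (UNIV :: 'd::finite set))"
  by (rule prob_space_uniform_count_measure) auto
lemma ps_UT: "prob_space UT"
  by (rule prob_space_uniform_measure) auto
lemma ps_US: "prob_space US"
  by (rule prob_space_uniform_count_measure) auto
lemma ps_step: "prob_space (step_measure :: ('d::finite \<times> real \<times> real) measure)"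
  unfolding step_measure_def by (intro prob_space_pair ps_UC ps_UT ps_US)

lemma avg:
  fixes f :: "'d::finite \<times> real \<times> real \<Rightarrow> ennreal"
  assumes f: "f \<in> borel_measurable step_measure"
    and B: "\<And>i \<sigma>. \<sigma> \<in> {-1,1} \<Longrightarrow> (\<integral>\<^sup>+\<theta>. f (i,\<theta>,\<sigma>) \<partial>UT) \<le> B"
  shows "(\<integral>\<^sup>+x. f x \<partial>step_measure) \<le> B"
proof -
  interpret P2: prob_space "UT \<Otimes>\<^sub>M US" by (intro prob_space_pair ps_UT ps_US)
  interpret PT: pair_sigma_finite UT US
    by (intro pair_sigma_finite.intro prob_space_imp_sigma_finite ps_UT ps_US)
  interpret PC: prob_space "uniform_count_measure (UNIV :: 'd set)" by (rule ps_UC)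
  interpret PS: prob_space US by (rule ps_US)
  have f': "f \<in> borel_measurable (uniform_count_measure (UNIV :: 'd set) \<Otimes>\<^sub>M (UT \<Otimes>\<^sub>M US))"
    using f unfolding step_measure_def .
  have "(\<integral>\<^sup>+x. f x \<partial>step_measure) = (\<integral>\<^sup>+i. \<integral>\<^sup>+y. f (i,y) \<partial>(UT \<Otimes>\<^sub>M US) \<partial>uniform_count_measure (UNIV :: 'd set))"
    unfolding step_measure_def by (rule P2.nn_integral_fst[symmetric]) (rule f')
  also have "\<dots> \<le> (\<integral>\<^sup>+i. B \<partial>uniform_count_measure (UNIV :: 'd set))"
  proof (rule nn_integral_mono)
    fix i :: 'd
    have fi: "(\<lambda>y. f (i,y)) \<in> borel_measurable (UT \<Otimes>\<^sub>M US)"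
      by (rule measurable_Pair2[OF f']) (simp add: space_uniform_count_measure)
    have "(\<integral>\<^sup>+y. f (i,y) \<partial>(UT \<Otimes>\<^sub>M US)) = (\<integral>\<^sup>+\<sigma>. \<integral>\<^sup>+\<theta>. f (i,\<theta>,\<sigma>) \<partial>UT \<partial>US)"
      using PT.nn_integral_snd[OF fi] by simp
    also have "\<dots> \<le> (\<integral>\<^sup>+\<sigma>. B \<partial>US)"
      by (rule nn_integral_mono) (auto simp: space_uniform_count_measure intro: B)
    also have "\<dots> = B" using PS.emeasure_space_1 by simp
    finally show "(\<integral>\<^sup>+y. f (i,y) \<partial>(UT \<Otimes>\<^sub>M US)) \<le> B" .
  qed
  also have "\<dots> = B" using PC.emeasure_space_1 by simp
  finally show ?thesis .
qed

lemma psi_chld_meas: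
  assumes "finite C" "S \<subseteq> C"
  shows "(\<lambda>x. ennreal (psi \<alpha> (chld med eps x S))) \<in> borel_measurable step_measure"
proof -
  have m2: "(\<lambda>L. ennreal (psi \<alpha> L)) \<in> measurable (count_space (lists (Pow C))) borel"
    by (simp add: measurable_count_space_eq1)
  from measurable_compose[OF chld_meas[OF assms] m2] show ?thesis .
qed

lemma psi_stp_meas:
  assumes "finite C" "Ls \<in> lists (Pow C)"
  shows "(\<lambda>x. ennreal (psi \<alpha> (stp med eps x Ls))) \<in> borel_measurable step_measure"
proof -
  have m2: "(\<lambda>L. ennreal (psi \<alpha> L)) \<in> measurable (count_space (lists (Pow C))) borel"
    by (simp add: measurable_count_space_eq1)
  from measurable_compose[OF stp_meas[OF assms] m2] show ?thesis .
qed

lemma step_int: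
  fixes S :: "(real^'d) set"
  assumes fC: "finite C" "S \<subseteq> C" "S \<noteq> {}" and md: "2 \<le> card S \<Longrightarrow> is_median S (med S)"
    and e: "0 \<le> eps" "eps < 1" and al: "0 \<le> \<alpha>"
    and al2: "2 powr \<alpha> = ((1+eps)/(1-eps))\<^sup>2"
  shows "(\<integral>\<^sup>+x. ennreal (psi \<alpha> (chld med eps x S)) \<partial>step_measure) \<le> ennreal (psi \<alpha> [S])"
proof (rule avg[OF psi_chld_meas[OF fC(1,2)]])
  fix i \<sigma> assume sg: "(\<sigma>::real) \<in> {-1,1}"
  show "(\<integral>\<^sup>+\<theta>. ennreal (psi \<alpha> (chld med eps (i,\<theta>,\<sigma>) S)) \<partial>UT) \<le> ennreal (psi \<alpha> [S])"
    by (rule theta_int[where S=S and med=med and C=C, OF fC md sg e al al2])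
qed

lemma round_int:
  fixes C :: "(real^'d) set"
  assumes fC: "finite C" and md: "\<And>S. S \<subseteq> C \<Longrightarrow> S \<noteq> {} \<Longrightarrow> 2 \<le> card S \<Longrightarrow> is_median S (med S)"
    and e: "0 \<le> eps" "eps < 1" and al: "0 \<le> \<alpha>"
    and al2: "2 powr \<alpha> = ((1+eps)/(1-eps))\<^sup>2"
  shows "Ls \<in> lists (Vs C) \<Longrightarrow> (\<integral>\<^sup>+x. ennreal (psi \<alpha> (stp med eps x Ls)) \<partial>step_measure) \<le> ennreal (psi \<alpha> Ls)"
proof (induction Ls)
  case Nil
  then show ?case by (simp add: stp_def psi_def)
next
  case (Cons S Ls)
  have S: "S \<subseteq> C" "S \<noteq> {}" and L: "Ls \<in> lists (Vs C)" using Cons.prems by (auto simp: Vs_def)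
  have LP: "Ls \<in> lists (Pow C)" using L Vs_Pow by auto
  have eq: "ennreal (psi \<alpha> (stp med eps x (S # Ls))) = ennreal (psi \<alpha> (chld med eps x S)) + ennreal (psi \<alpha> (stp med eps x Ls))" for x
    by (simp add: stp_def psi_append psi_nonneg)
  have "(\<integral>\<^sup>+x. ennreal (psi \<alpha> (stp med eps x (S # Ls))) \<partial>step_measure)
      = (\<integral>\<^sup>+x. ennreal (psi \<alpha> (chld med eps x S)) \<partial>step_measure) + (\<integral>\<^sup>+x. ennreal (psi \<alpha> (stp med eps x Ls)) \<partial>step_measure)"
    unfolding eq by (rule nn_integral_add[OF psi_chld_meas[OF fC S(1)] psi_stp_meas[OF fC LP]])
  also have "\<dots> \<le> ennreal (psi \<alpha> [S]) + ennreal (psi \<alpha> Ls)"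
  proof (intro add_mono Cons.IH L)
    have md': "2 \<le> card S \<Longrightarrow> is_median S (med S)" using md S by auto
    show "(\<integral>\<^sup>+x. ennreal (psi \<alpha> (chld med eps x S)) \<partial>step_measure) \<le> ennreal (psi \<alpha> [S])"
      by (rule step_int[where S=S and med=med and C=C, OF fC S md' e al al2])
  qed
  also have "\<dots> = ennreal (psi \<alpha> (S # Ls))"
    using psi_append[of \<alpha> "[S]" Ls] ennreal_plus[OF psi_nonneg[of \<alpha> "[S]"] psi_nonneg[of \<alpha> Ls]] by simp
  finally show ?case .
qed

lemma main:
  fixes C :: "(real^'d) set"
  assumes fC: "finite C" and md: "\<And>S. S \<subseteq> C \<Longrightarrow> S \<noteq> {} \<Longrightarrow> 2 \<le> card S \<Longrightarrow> is_median S (med S)"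
    and e: "0 \<le> eps" "eps < 1" and al: "0 \<le> \<alpha>"
    and al2: "2 powr \<alpha> = ((1+eps)/(1-eps))\<^sup>2"
  shows "Ls \<in> lists (Vs C) \<Longrightarrow> (\<integral>\<^sup>+\<omega>. ennreal (psi \<alpha> (LLg med eps Ls \<omega> t)) \<partial>rounds_measure) \<le> ennreal (psi \<alpha> Ls)"
proof (induction t arbitrary: Ls)
  interpret M: prob_space "step_measure :: ('d \<times> real \<times> real) measure" by (rule ps_step)
  interpret SS: sequence_space "step_measure :: ('d \<times> real \<times> real) measure" ..
  have RM: "rounds_measure = (\<Pi>\<^sub>M i\<in>(UNIV::nat set). (step_measure :: ('d \<times> real \<times> real) measure))"
    unfolding rounds_measure_def ..
  {
    case 0
    show ?case unfolding RM using SS.emeasure_space_1 by simp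
  next
    case (Suc t)
    have LP: "Ls \<in> lists (Pow C)" using Suc.prems Vs_Pow by auto
    define \<Phi> where "\<Phi> = (\<lambda>\<omega>. ennreal (psi \<alpha> (LLg med eps Ls \<omega> (Suc t))))"
    have m2: "(\<lambda>L. ennreal (psi \<alpha> L)) \<in> measurable (count_space (lists (Pow C))) borel"
      by (simp add: measurable_count_space_eq1)
    have "\<Phi> \<in> borel_measurable rounds_measure"
      unfolding \<Phi>_def by (rule measurable_compose[OF LLg_meas[OF fC LP] m2])
    then have m\<Phi>: "\<Phi> \<in> borel_measurable SS.S" unfolding RM .
    have mc: "(\<lambda>(s, \<omega>). case_nat s \<omega>) \<in> measurable (step_measure \<Otimes>\<^sub>M SS.S) SS.S"
      by measurable
    have sh: "\<Phi> (case_nat s \<omega>') = ennreal (psi \<alpha> (LLg med eps (stp med eps s Ls) \<omega>' t))" for s \<omega>'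
      unfolding \<Phi>_def LLg_shift by simp
    have "(\<integral>\<^sup>+\<omega>. \<Phi> \<omega> \<partial>rounds_measure) = (\<integral>\<^sup>+\<omega>. \<Phi> \<omega> \<partial>distr (step_measure \<Otimes>\<^sub>M SS.S) SS.S (\<lambda>(s, \<omega>). case_nat s \<omega>))"
      unfolding RM SS.PiM_iter ..
    also have "\<dots> = (\<integral>\<^sup>+x. \<Phi> (case_nat (fst x) (snd x)) \<partial>(step_measure \<Otimes>\<^sub>M SS.S))"
      by (subst nn_integral_distr) (use mc m\<Phi> in \<open>simp_all add: split_beta'\<close>)
    also have "\<dots> = (\<integral>\<^sup>+s. \<integral>\<^sup>+\<omega>'. \<Phi> (case_nat s \<omega>') \<partial>SS.S \<partial>step_measure)"
      by (subst SS.nn_integral_fst[symmetric]) (use measurable_compose[OF mc m\<Phi>] in \<open>simp_all add: split_beta'\<close>)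
    also have "\<dots> \<le> (\<integral>\<^sup>+s. ennreal (psi \<alpha> (stp med eps s Ls)) \<partial>step_measure)"
    proof (rule nn_integral_mono)
      fix s
      have "stp med eps s Ls \<in> lists (Vs C)" by (rule stp_valid[OF Suc.prems])
      then show "(\<integral>\<^sup>+\<omega>'. \<Phi> (case_nat s \<omega>') \<partial>SS.S) \<le> ennreal (psi \<alpha> (stp med eps s Ls))"
        unfolding sh using Suc.IH RM by simp
    qed
    also have "\<dots> \<le> ennreal (psi \<alpha> Ls)"
      by (rule round_int[OF fC md e al al2 Suc.prems])
    finally show ?case unfolding \<Phi>_def .
  }
qed

lemma eps_bounds:
  assumes "0 < \<delta>" "(1::nat) \<le> k"
  shows "0 \<le> alg_eps \<delta> k" "alg_eps \<delta> k \<le> 1/320"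
proof -
  have "0 \<le> ln (real k)" using assms by simp
  then have "0 \<le> \<delta> / (15 * ln (real k))" using assms by simp
  then show "0 \<le> alg_eps \<delta> k" unfolding alg_eps_def by simp
  show "alg_eps \<delta> k \<le> 1/320" unfolding alg_eps_def by simp
qed

lemma final_bound:
  fixes k :: nat
  assumes k: "1 \<le> k" and d: "0 < \<delta>" "\<delta> < 1"
  defines "\<epsilon> \<equiv> alg_eps \<delta> k"
  defines "\<alpha> \<equiv> 2 * log 2 ((1+\<epsilon>)/(1-\<epsilon>))"
  shows "real k powr \<alpha> \<le> 1 + \<delta>" and "0 \<le> \<alpha>" and "2 powr \<alpha> = ((1+\<epsilon>)/(1-\<epsilon>))\<^sup>2"
proof -
  have e0: "0 \<le> \<epsilon>" and e1: "\<epsilon> \<le> 1/320" using eps_bounds[OF d(1) k] unfolding \<epsilon>_def by auto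
  define r where "r = (1+\<epsilon>)/(1-\<epsilon>)"
  have r1: "1 \<le> r" unfolding r_def using e0 e1 by (simp add: field_simps)
  have rle: "r - 1 \<le> (640/319) * \<epsilon>"
  proof -
    have "r - 1 = 2 * \<epsilon> / (1 - \<epsilon>)" unfolding r_def using e1 by (simp add: field_simps)
    also have "\<dots> \<le> 2 * \<epsilon> / (319/320)" using e0 e1 by (intro divide_left_mono) auto
    finally show ?thesis by simp
  qed
  have lnr: "ln r \<le> (640/319) * \<epsilon>" using ln_le_minus_one[of r] r1 rle by simp
  have lnr0: "0 \<le> ln r" using r1 by simp
  have l2: "2/3 \<le> ln (2::real)" by (rule ln2_ge_two_thirds)
  have al_eq: "\<alpha> = 2 * ln r / ln 2" unfolding \<alpha>_def r_def[symmetric] log_def by simp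
  show al0: "0 \<le> \<alpha>" unfolding al_eq using lnr0 l2 by simp
  show "2 powr \<alpha> = ((1+\<epsilon>)/(1-\<epsilon>))\<^sup>2"
  proof -
    have "2 powr \<alpha> = (2 powr (log 2 r)) powr 2" unfolding \<alpha>_def r_def[symmetric] powr_powr by (simp add: mult.commute)
    also have "\<dots> = r powr 2" using r1 by simp
    also have "\<dots> = r\<^sup>2" using r1 by (simp add: powr_numeral)
    finally show ?thesis unfolding r_def .
  qed
  show "real k powr \<alpha> \<le> 1 + \<delta>"
  proof (cases "k = 1")
    case True
    then show ?thesis using d by simp
  next
    case False
    then have k2: "2 \<le> k" using k by simp
    define L where "L = ln (real k)"
    have L0: "0 < L" unfolding L_def using k2 by simp
    have eL: "\<epsilon> * L \<le> \<delta> / 15"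
    proof -
      have "\<epsilon> \<le> \<delta> / (15 * L)" unfolding \<epsilon>_def alg_eps_def L_def by simp
      then have "\<epsilon> * L \<le> \<delta> / (15 * L) * L" using L0 by (intro mult_right_mono) auto
      also have "\<dots> = \<delta> / 15" using L0 by simp
      finally show ?thesis .
    qed
    define x where "x = \<alpha> * L"
    have x0: "0 \<le> x" unfolding x_def using al0 L0 by simp
    have "x = 2 * ln r * L / ln 2" unfolding x_def al_eq by simp
    also have "\<dots> \<le> 2 * ((640/319) * \<epsilon>) * L / ln 2"
      using lnr L0 l2 by (intro divide_right_mono mult_right_mono mult_left_mono) auto
    also have "\<dots> \<le> 2 * ((640/319) * \<epsilon>) * L / (2/3)"
      using l2 e0 L0 by (intro divide_left_mono) auto
    also have "\<dots> = (1920/319) * (\<epsilon> * L)" by simp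
    also have "\<dots> \<le> (1920/319) * (\<delta> / 15)" using eL by (intro mult_left_mono) auto
    finally have xd: "x \<le> (128/319) * \<delta>" by simp
    have "norm x \<le> 1/2" using xd x0 d by simp
    then have "norm (exp x) \<le> 1 + 2 * norm x" by (rule exp_bound_lemma)
    then have "exp x \<le> 1 + 2 * x" using x0 by simp
    moreover have "real k powr \<alpha> = exp x" unfolding x_def L_def powr_def using k by (simp add: mult.commute)
    ultimately show ?thesis using xd d by simp
  qed
qed

theorem theorem4:
  fixes C :: "(real^'d) set"
    and med :: "(real^'d) set \<Rightarrow> real^'d"
    and \<delta> :: real
  assumes "finite C" and "C \<noteq> {}"
    and "0 < \<delta>" and "\<delta> < 1"
    and "\<And>S. S \<subseteq> C \<Longrightarrow> S \<noteq> {} \<Longrightarrow> is_median S (med S)"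
  shows "(\<integral>\<^sup>+ \<omega>. output_leaves med (alg_eps \<delta> (card C)) C \<omega> \<partial>rounds_measure)
           \<le> ennreal ((1 + \<delta>) * real (card C))"
proof -
  define k where "k = card C"
  have k1: "1 \<le> k" unfolding k_def using assms(1,2) by (simp add: Suc_le_eq card_gt_0_iff)
  define eps where "eps = alg_eps \<delta> k"
  define \<alpha> where "\<alpha> = 2 * log 2 ((1+eps)/(1-eps))"
  have e0: "0 \<le> eps" and e1: "eps < 1" using eps_bounds[OF assms(3) k1] unfolding eps_def by auto
  have kb: "real k powr \<alpha> \<le> 1 + \<delta>" and al: "0 \<le> \<alpha>" and al2: "2 powr \<alpha> = ((1+eps)/(1-eps))\<^sup>2"
    using final_bound[OF k1 assms(3,4)] unfolding \<alpha>_def eps_def by auto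
  have md: "\<And>S. S \<subseteq> C \<Longrightarrow> S \<noteq> {} \<Longrightarrow> 2 \<le> card S \<Longrightarrow> is_median S (med S)" using assms(5) by blast
  have CV: "[C] \<in> lists (Vs C)" using assms(2) by (simp add: Vs_def)
  have CP: "[C] \<in> lists (Pow C)" by simp
  define f where "f = (\<lambda>t \<omega>. ennreal (real (length (LLg med eps [C] \<omega> t))))"
  have out: "output_leaves med eps C \<omega> = (SUP t. f t \<omega>)" for \<omega>
    unfolding output_leaves_def f_def num_leaves_lvs lvs_alg_tree ..
  have len_mono: "length Ls \<le> length (stp med eps x Ls)" for x Ls
  proof (induction Ls)
    case (Cons S Ls)
    have "1 \<le> length (chld med eps x S)"
      by (cases x) (auto simp: chld_def Let_def)
    then show ?case using Cons by (simp add: stp_def)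
  qed simp
  have inc: "incseq f"
    unfolding incseq_Suc_iff le_fun_def f_def using len_mono by (auto intro: ennreal_leI)
  have m2: "(\<lambda>L. ennreal (real (length L))) \<in> measurable (count_space (lists (Pow C))) borel"
    by (simp add: measurable_count_space_eq1)
  have fm: "f t \<in> borel_measurable rounds_measure" for t
    unfolding f_def by (rule measurable_compose[OF LLg_meas[OF assms(1) CP] m2])
  have "(\<integral>\<^sup>+ \<omega>. output_leaves med eps C \<omega> \<partial>rounds_measure) = (SUP t. \<integral>\<^sup>+ \<omega>. f t \<omega> \<partial>rounds_measure)"
    unfolding out by (rule nn_integral_monotone_convergence_SUP[OF inc fm])
  also have "\<dots> \<le> ennreal (psi \<alpha> [C])"
  proof (rule SUP_least)
    fix t
    have "(\<integral>\<^sup>+ \<omega>. f t \<omega> \<partial>rounds_measure) \<le> (\<integral>\<^sup>+ \<omega>. ennreal (psi \<alpha> (LLg med eps [C] \<omega> t)) \<partial>rounds_measure)"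
    proof (rule nn_integral_mono)
      fix \<omega>
      have "LLg med eps [C] \<omega> t \<in> lists (Vs C)" by (rule LLg_valid[OF CV])
      then have "LLg med eps [C] \<omega> t \<in> lists {S. finite S \<and> S \<noteq> {}}"
        using assms(1) by (auto simp: Vs_def intro: finite_subset)
      then show "f t \<omega> \<le> ennreal (psi \<alpha> (LLg med eps [C] \<omega> t))"
        unfolding f_def by (intro ennreal_leI length_le_psi al)
    qed
    also have "\<dots> \<le> ennreal (psi \<alpha> [C])"
      by (rule main[OF assms(1) md e0 e1 al al2 CV])
    finally show "(\<integral>\<^sup>+ \<omega>. f t \<omega> \<partial>rounds_measure) \<le> ennreal (psi \<alpha> [C])" .
  qed
  also have "\<dots> \<le> ennreal ((1 + \<delta>) * real (card C))"
  proof (rule ennreal_leI)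
    have "psi \<alpha> [C] = real k * real k powr \<alpha>" unfolding psi_def k_def by simp
    also have "\<dots> \<le> real k * (1 + \<delta>)" using kb by (intro mult_left_mono) auto
    finally show "psi \<alpha> [C] \<le> (1 + \<delta>) * real (card C)" unfolding k_def by (simp add: mult.commute)
  qed
  finally show ?thesis unfolding eps_def k_def .
qed

end
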